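(* Let $k\ge 2$ and let $x_0\in\Sigma_k^*$ be any word. Then the sequence $(x_n)_{n\ge 0}$ defined by $x_{n+1}=\mathcal P_k(x_n)$ is eventually periodic: there exist integers $N\ge 0$ and $p\ge 1$ such that $x_{n+p}=x_n$ for all $n\ge N$. In particular, the sequence eventually enters a fixed point ($p=1$) or a cycle.
   Context: Fix an integer $k\ge 2$ and the alphabet $\Sigma_k=\{0,1,\dots,k-1\}$. A word is a finite nonempty string of letters of $\Sigma_k$ (leading zeros allowed); $\Sigma_k^*$ denotes the set of words. For a word $x$, $|x|$ denotes its length and $|x|_i$ the number of occurrences of the letter $i$ in $x$. For a positive integer $c$, $[c]_k$ denotes its standard base-$k$ representation without leading zeros, viewed as a word over $\Sigma_k$; it has $\lfloor\log_k c\rfloor+1$ letters. The map $\mathcal P_k:\Sigma_k^*\to\Sigma_k^*$ is defined as follows: if $b_1>b_2>\dots>b_r$ are exactly the letters occurring in $x$ (i.e. those with $|x|_{b_j}\neq 0$), then $\mathcal P_k(x)=[|x|_{b_1}]_k\,b_1\,[|x|_{b_2}]_k\,b_2\cdots[|x|_{b_r}]_k\,b_r$ (concatenation). For example, for $k=10$, $\mathcal P_{10}(123)=131211$. A fixed point is a word $x$ with $\mathcal P_k(x)=x$. *)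

theory Defs
  imports Main
begin

(* standard base-k representation of a positive integer c, most significant digit first,
   without leading zeros; for c = 0 it returns [] (never used on c = 0 below) *)
fun base_rep :: "nat \<Rightarrow> nat \<Rightarrow> nat list" where
  "base_rep k c = (if c = 0 \<or> k < 2 then [] else base_rep k (c div k) @ [c mod k])"

declare base_rep.simps [simp del]

definition occ :: "nat list \<Rightarrow> nat \<Rightarrow> nat" where
  "occ x i = count_list x i"

definition is_word :: "nat \<Rightarrow> nat list \<Rightarrow> bool" where
  "is_word k x \<longleftrightarrow> x \<noteq> [] \<and> set x \<subseteq> {..<k}"

definition Pk :: "nat \<Rightarrow> nat list \<Rightarrow> nat list" where
  "Pk k x = concat (map (\<lambda>b. base_rep k (occ x b) @ [b])
                        (rev (sorted_list_of_set (set x))))"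

end

theory Submission
  imports Defs
begin

lemma base_rep_len: "k \<ge> 2 \<Longrightarrow> length (base_rep k c) \<le> 1 + c div k"
proof (induction c rule: less_induct)
  case (less c)
  show ?case
  proof (cases "c = 0")
    case True then show ?thesis by (simp add: base_rep.simps)
  next
    case False
    have eq: "base_rep k c = base_rep k (c div k) @ [c mod k]"
      using False less.prems by (simp add: base_rep.simps)
    have lt: "c div k < c" using False less.prems by simp
    have ih: "length (base_rep k (c div k)) \<le> 1 + c div k div k"
      using less.IH[OF lt less.prems] .
    show ?thesis
    proof (cases "c div k = 0")
      case True
      then show ?thesis using eq by (simp add: base_rep.simps)
    next
      case F2: False
      have "c div k div k < c div k" using F2 less.prems by simp
      then show ?thesis using eq ih by simp
    qed
  qed
qed

lemma base_rep_set: "set (base_rep k c) \<subseteq> {..<k}"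
proof (induction c rule: less_induct)
  case (less c)
  show ?case
  proof (cases "c = 0 \<or> k < 2")
    case True then show ?thesis by (simp add: base_rep.simps)
  next
    case False
    then have "base_rep k c = base_rep k (c div k) @ [c mod k]" by (simp add: base_rep.simps)
    moreover have "c div k < c" using False by simp
    ultimately show ?thesis using less.IH False by auto
  qed
qed

lemma sum_count: "finite A \<Longrightarrow> set x \<subseteq> A \<Longrightarrow> (\<Sum>b\<in>A. count_list x b) = length x"
proof (induction x)
  case Nil then show ?case by simp
next
  case (Cons a x)
  have "(\<Sum>b\<in>A. count_list (a#x) b) = (\<Sum>b\<in>A. (if a = b then 1 else 0) + count_list x b)"
    by (rule sum.cong) auto
  also have "\<dots> = (\<Sum>b\<in>A. (if a = b then 1 else 0)) + (\<Sum>b\<in>A. count_list x b)"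
    by (rule sum.distrib)
  also have "\<dots> = 1 + length x" using Cons by (simp add: sum.delta)
  finally show ?case by simp
qed

lemma Pk_set: "set (Pk k x) \<subseteq> {..<k} \<union> set x"
  unfolding Pk_def using base_rep_set by auto

lemma Pk_len:
  assumes k: "k \<ge> 2" and x: "set x \<subseteq> {..<k}"
  shows "k * length (Pk k x) \<le> 2 * k * k + length x"
proof -
  let ?g = "\<lambda>b. length (base_rep k (occ x b) @ [b])"
  have "length (Pk k x) = sum_list (map ?g (rev (sorted_list_of_set (set x))))"
    unfolding Pk_def by (simp add: length_concat comp_def)
  also have "\<dots> = (\<Sum>b\<in>set x. ?g b)"
    by (subst sum_list_distinct_conv_sum_set) auto
  finally have L: "length (Pk k x) = (\<Sum>b\<in>set x. ?g b)" .
  have "k * length (Pk k x) = (\<Sum>b\<in>set x. k * ?g b)" by (simp add: L sum_distrib_left)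
  also have "\<dots> \<le> (\<Sum>b\<in>set x. 2 * k + occ x b)"
  proof (rule sum_mono)
    fix b
    have "length (base_rep k (occ x b)) \<le> 1 + occ x b div k" using base_rep_len[OF k] .
    then have "?g b \<le> 2 + occ x b div k" by simp
    then have "k * ?g b \<le> k * (2 + occ x b div k)" by (rule mult_le_mono2)
    also have "\<dots> = 2 * k + k * (occ x b div k)" by (simp add: algebra_simps)
    also have "\<dots> \<le> 2 * k + occ x b" by simp
    finally show "k * ?g b \<le> 2 * k + occ x b" .
  qed
  also have "\<dots> = card (set x) * (2 * k) + length x"
    using sum_count[of "set x" x] by (simp add: sum.distrib occ_def)
  also have "\<dots> \<le> k * (2 * k) + length x"
  proof -
    have "card (set x) \<le> card {..<k}" by (rule card_mono) (use x in auto)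
    then show ?thesis by simp
  qed
  finally show ?thesis by simp
qed

theorem theorem1:
  fixes k :: nat and x0 :: "nat list"
  assumes "k \<ge> 2" and "is_word k x0"
  shows "\<exists>N p. p \<ge> 1 \<and> (\<forall>n \<ge> N. (Pk k ^^ (n + p)) x0 = (Pk k ^^ n) x0)"
proof -
  define L where "L = max (length x0) (2 * k * k)"
  define S where "S = {x. set x \<subseteq> {..<k} \<and> length x \<le> L}"
  have finS: "finite S" unfolding S_def
    by (rule finite_lists_length_le) simp
  have step: "Pk k x \<in> S" if "x \<in> S" for x
  proof -
    have xs: "set x \<subseteq> {..<k}" "length x \<le> L" using that S_def by auto
    have "k * length (Pk k x) \<le> 2 * k * k + length x" using Pk_len[OF assms(1) xs(1)] .
    also have "\<dots> \<le> 2 * L" using xs(2) unfolding L_def by simp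
    also have "\<dots> \<le> k * L" using assms(1) by simp
    finally have "length (Pk k x) \<le> L" using assms(1) by simp
    moreover have "set (Pk k x) \<subseteq> {..<k}" using Pk_set[of k x] xs(1) by auto
    ultimately show ?thesis unfolding S_def by simp
  qed
  have x0S: "x0 \<in> S" using assms(2) unfolding S_def L_def is_word_def by auto
  have itS: "(Pk k ^^ n) x0 \<in> S" for n
    by (induction n) (auto simp: x0S step)
  define f where "f = (\<lambda>n. (Pk k ^^ n) x0)"
  have "\<not> inj_on f {0..card S}"
  proof
    assume "inj_on f {0..card S}"
    moreover have "f ` {0..card S} \<subseteq> S" using itS f_def by auto
    ultimately have "card {0..card S} \<le> card S" using card_inj_on_le finS by blast
    then show False by simp
  qed
  then obtain i j where ij: "i < j" "f i = f j"
    unfolding inj_on_def by (metis linorder_neqE_nat)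
  have "\<forall>n \<ge> i. (Pk k ^^ (n + (j - i))) x0 = (Pk k ^^ n) x0"
  proof (intro allI impI)
    fix n assume "n \<ge> i"
    then have "n + (j - i) = (n - i) + j" "n = (n - i) + i" using ij by auto
    then show "(Pk k ^^ (n + (j - i))) x0 = (Pk k ^^ n) x0"
      using ij(2) unfolding f_def by (metis funpow_add comp_apply)
  qed
  then show ?thesis using ij by (intro exI[of _ i] exI[of _ "j - i"]) auto
qed

end
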